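(* Let $V$ be a real vector space with an inner product of signature $(p,q)$ where $p\ge2$ and $q\ge2$. Then: (1) There exists an algebraic curvature tensor $R$ on $V$ which has spacelike rank $2$ but which does not have constant timelike rank nor constant mixed rank. (2) There exists an algebraic curvature tensor $R$ on $V$ which has timelike rank $2$ but which does not have constant spacelike rank nor constant mixed rank. (3) There exists an algebraic curvature tensor $R$ on $V$ which has spacelike rank $2$ and timelike rank $2$ but which does not have constant mixed rank.
   Context: An inner product of signature $(p,q)$ is a non-degenerate symmetric bilinear form $(\cdot,\cdot)$ whose maximal negative definite subspaces have dimension $p$ and maximal positive definite subspaces dimension $q$. A $2$-plane $\pi$ is spacelike (resp. timelike, mixed) if the induced form on $\pi$ has signature $(0,2)$ (resp. $(2,0)$, $(1,1)$). An algebraic curvature tensor is $R\in\otimes^4V^*$ with $R(x,y,z,w)=R(z,w,x,y)=-R(y,x,z,w)$ and $R(x,y,z,w)+R(y,z,x,w)+R(z,x,y,w)=0$; the operator $R(x,y)$ is defined by $R(x,y,z,w)=(R(x,y)z,w)$. For a non-degenerate $2$-plane $\pi$ with oriented basis $\{e_1,e_2\}$, $R(\pi):=|(e_1,e_1)(e_2,e_2)-(e_1,e_2)^2|^{-1/2}R(e_1,e_2)$. $R$ has spacelike rank $r$ if $\operatorname{rank}R(\pi)=r$ for every oriented spacelike $2$-plane $\pi$; timelike rank $r$ and mixed rank $r$ are defined analogously using timelike, resp. mixed, $2$-planes. $R$ has constant timelike (mixed) rank if it has timelike (mixed) rank $r$ for some $r$. *)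

theory Defs
  imports "HOL-Analysis.Analysis"
begin

definition symmetric_bilinear :: "('a::real_vector \<Rightarrow> 'a \<Rightarrow> real) \<Rightarrow> bool" where
  "symmetric_bilinear B \<longleftrightarrow> (\<forall>x. linear (B x)) \<and> (\<forall>y. linear (\<lambda>x. B x y)) \<and> (\<forall>x y. B x y = B y x)"

definition neg_definite_on :: "('a::real_vector \<Rightarrow> 'a \<Rightarrow> real) \<Rightarrow> 'a set \<Rightarrow> bool" where
  "neg_definite_on B W \<longleftrightarrow> (\<forall>v\<in>W. v \<noteq> 0 \<longrightarrow> B v v < 0)"

definition pos_definite_on :: "('a::real_vector \<Rightarrow> 'a \<Rightarrow> real) \<Rightarrow> 'a set \<Rightarrow> bool" where
  "pos_definite_on B W \<longleftrightarrow> (\<forall>v\<in>W. v \<noteq> 0 \<longrightarrow> B v v > 0)"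

definition has_signature :: "('a::euclidean_space \<Rightarrow> 'a \<Rightarrow> real) \<Rightarrow> 'a set \<Rightarrow> nat \<Rightarrow> nat \<Rightarrow> bool" where
  "has_signature B S p q \<longleftrightarrow>
     subspace S \<and>
     (\<forall>v\<in>S. (\<forall>w\<in>S. B v w = 0) \<longrightarrow> v = 0) \<and>
     (\<forall>W. subspace W \<and> W \<subseteq> S \<and> neg_definite_on B W \<and>
          (\<forall>W'. subspace W' \<and> W \<subseteq> W' \<and> W' \<subseteq> S \<and> neg_definite_on B W' \<longrightarrow> W' = W)
          \<longrightarrow> dim W = p) \<and>
     (\<forall>W. subspace W \<and> W \<subseteq> S \<and> pos_definite_on B W \<and>
          (\<forall>W'. subspace W' \<and> W \<subseteq> W' \<and> W' \<subseteq> S \<and> pos_definite_on B W' \<longrightarrow> W' = W)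
          \<longrightarrow> dim W = q)"

definition inner_product_sig :: "('a::euclidean_space \<Rightarrow> 'a \<Rightarrow> real) \<Rightarrow> nat \<Rightarrow> nat \<Rightarrow> bool" where
  "inner_product_sig B p q \<longleftrightarrow> symmetric_bilinear B \<and> has_signature B UNIV p q"

definition alg_curv_tensor :: "('a::real_vector \<Rightarrow> 'a \<Rightarrow> 'a \<Rightarrow> 'a \<Rightarrow> real) \<Rightarrow> bool" where
  "alg_curv_tensor R \<longleftrightarrow>
     (\<forall>y z w. linear (\<lambda>x. R x y z w)) \<and> (\<forall>x z w. linear (\<lambda>y. R x y z w)) \<and>
     (\<forall>x y w. linear (\<lambda>z. R x y z w)) \<and> (\<forall>x y z. linear (\<lambda>w. R x y z w)) \<and>
     (\<forall>x y z w. R x y z w = R z w x y) \<and>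
     (\<forall>x y z w. R x y z w = - R y x z w) \<and>
     (\<forall>x y z w. R x y z w + R y z x w + R z x y w = 0)"

definition curv_op :: "('a \<Rightarrow> 'a \<Rightarrow> real) \<Rightarrow> ('a \<Rightarrow> 'a \<Rightarrow> 'a \<Rightarrow> 'a \<Rightarrow> real) \<Rightarrow> 'a \<Rightarrow> 'a \<Rightarrow> 'a \<Rightarrow> 'a" where
  "curv_op B R x y z = (THE u. \<forall>w. R x y z w = B u w)"

definition plane_op :: "('a::real_vector \<Rightarrow> 'a \<Rightarrow> real) \<Rightarrow> ('a \<Rightarrow> 'a \<Rightarrow> 'a \<Rightarrow> 'a \<Rightarrow> real) \<Rightarrow> 'a \<Rightarrow> 'a \<Rightarrow> 'a \<Rightarrow> 'a" where
  "plane_op B R e1 e2 z =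
     (\<bar>B e1 e1 * B e2 e2 - (B e1 e2)^2\<bar> powr (-1/2)) *\<^sub>R curv_op B R e1 e2 z"

definition op_rank :: "('a::euclidean_space \<Rightarrow> 'a) \<Rightarrow> nat" where
  "op_rank f = dim (range f)"

definition rank_on_planes :: "('a::euclidean_space \<Rightarrow> 'a \<Rightarrow> real) \<Rightarrow> nat \<Rightarrow> nat \<Rightarrow>
     ('a \<Rightarrow> 'a \<Rightarrow> 'a \<Rightarrow> 'a \<Rightarrow> real) \<Rightarrow> nat \<Rightarrow> bool" where
  "rank_on_planes B a b R r \<longleftrightarrow>
     (\<forall>e1 e2. e1 \<noteq> e2 \<and> independent {e1, e2} \<and> has_signature B (span {e1, e2}) a b
        \<longrightarrow> op_rank (plane_op B R e1 e2) = r)"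

definition spacelike_rank where "spacelike_rank B R r \<longleftrightarrow> rank_on_planes B 0 2 R r"
definition timelike_rank where "timelike_rank B R r \<longleftrightarrow> rank_on_planes B 2 0 R r"
definition mixed_rank where "mixed_rank B R r \<longleftrightarrow> rank_on_planes B 1 1 R r"

definition const_timelike_rank where "const_timelike_rank B R \<longleftrightarrow> (\<exists>r. timelike_rank B R r)"
definition const_mixed_rank where "const_mixed_rank B R \<longleftrightarrow> (\<exists>r. mixed_rank B R r)"
definition const_spacelike_rank where "const_spacelike_rank B R \<longleftrightarrow> (\<exists>r. spacelike_rank B R r)"

end

theory Submission
  imports Defs
begin

definition Bop :: "(real^'n \<Rightarrow> real^'n \<Rightarrow> real) \<Rightarrow> real^'n \<Rightarrow> real^'n" where
  "Bop B y = (\<Sum>b\<in>Basis. B b y *\<^sub>R b)"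

definition nondeg :: "(real^'n \<Rightarrow> real^'n \<Rightarrow> real) \<Rightarrow> bool" where
  "nondeg B \<longleftrightarrow> (\<forall>v. (\<forall>w. B v w = 0) \<longrightarrow> v = 0)"

lemma Bop_inner:
  assumes "symmetric_bilinear B" shows "x \<bullet> Bop B y = B x y"
proof -
  have lin: "linear (\<lambda>x. B x y)" using assms unfolding symmetric_bilinear_def by auto
  have "B x y = B (\<Sum>b\<in>Basis. (x \<bullet> b) *\<^sub>R b) y" by (simp add: euclidean_representation)
  also have "\<dots> = (\<Sum>b\<in>Basis. (x \<bullet> b) * B b y)"
    by (simp only: linear_sum[OF lin] linear_scale[OF lin]) simp
  also have "\<dots> = x \<bullet> Bop B y" unfolding Bop_def by (simp add: inner_sum_right mult.commute)
  finally show ?thesis by simp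
qed

lemma Bop_linear: assumes "symmetric_bilinear B" shows "linear (Bop B)"
proof -
  have "\<And>b. linear (B b)" using assms unfolding symmetric_bilinear_def by auto
  then have "linear (\<lambda>y. B b y *\<^sub>R b)" for b
    unfolding linear_iff by (simp add: linear_add linear_scale scaleR_add_left)
  then show ?thesis unfolding Bop_def
    by (intro linear_compose_sum) auto
qed

lemma Bop_inj: assumes "symmetric_bilinear B" "nondeg B" shows "inj (Bop B)"
proof (rule linear_injective_0[THEN iffD2, OF Bop_linear[OF assms(1)]], intro allI impI)
  fix y assume "Bop B y = 0"
  then have "\<forall>w. B y w = 0" using Bop_inner[OF assms(1)] assms(1)
    unfolding symmetric_bilinear_def by (metis inner_zero_right)
  then show "y = 0" using assms(2) unfolding nondeg_def by blast
qed

lemma Bop_surj: assumes "symmetric_bilinear B" "nondeg B" shows "surj (Bop B)"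
  using linear_injective_imp_surjective[OF Bop_linear[OF assms(1)] Bop_inj[OF assms]] by simp

lemma curv_op_eq:
  assumes "symmetric_bilinear B" "nondeg B" "\<And>w. R x y z w = w \<bullet> a"
  shows "Bop B (curv_op B R x y z) = a"
proof -
  obtain u where u: "Bop B u = a" using Bop_surj[OF assms(1,2)] by (metis surjD)
  have "\<forall>w. R x y z w = B u w" using assms(3) u Bop_inner[OF assms(1)] assms(1)
    unfolding symmetric_bilinear_def by metis
  moreover have "u' = u" if "\<forall>w. R x y z w = B u' w" for u'
  proof -
    have "\<forall>w. B (u' - u) w = 0" using that \<open>\<forall>w. R x y z w = B u w\<close> assms(1)
      unfolding symmetric_bilinear_def by (simp add: linear_diff)
    then show ?thesis using assms(2) unfolding nondeg_def by auto
  qed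
  ultimately have "curv_op B R x y z = u" unfolding curv_op_def by (intro the_equality) auto
  then show ?thesis using u by simp
qed

definition Av :: "real^'n \<Rightarrow> real^'n \<Rightarrow> real^'n \<Rightarrow> real^'n" where
  "Av v1 v2 z = (v2 \<bullet> z) *\<^sub>R v1 - (v1 \<bullet> z) *\<^sub>R v2"

lemma dimA0:
  assumes "\<alpha> \<noteq> 0 \<or> \<beta> \<noteq> 0" "\<alpha> *\<^sub>R v1 + \<beta> *\<^sub>R v2 = 0"
  shows "dim (range (Av v1 v2)) = 0"
proof -
  have "Av v1 v2 z = 0" for z
  proof (cases "\<alpha> \<noteq> 0")
    case True
    have "\<alpha> *\<^sub>R v1 = (\<alpha> *\<^sub>R v1 + \<beta> *\<^sub>R v2) - \<beta> *\<^sub>R v2" by simp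
    also have "\<dots> = (- \<beta>) *\<^sub>R v2" using assms(2) by simp
    finally have h: "\<alpha> *\<^sub>R v1 = (- \<beta>) *\<^sub>R v2" .
    have "v1 = (1 / \<alpha>) *\<^sub>R (\<alpha> *\<^sub>R v1)" using True by simp
    also have "\<dots> = (- \<beta> / \<alpha>) *\<^sub>R v2" unfolding h by simp
    finally have "v1 = (- \<beta> / \<alpha>) *\<^sub>R v2" .
    then show ?thesis unfolding Av_def by simp
  next
    case False
    then have nb: "\<beta> \<noteq> 0" using assms(1) by simp
    have "\<beta> *\<^sub>R v2 = (\<alpha> *\<^sub>R v1 + \<beta> *\<^sub>R v2) - \<alpha> *\<^sub>R v1" by simp
    also have "\<dots> = (- \<alpha>) *\<^sub>R v1" using assms(2) by simp
    finally have h: "\<beta> *\<^sub>R v2 = (- \<alpha>) *\<^sub>R v1" .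
    have "v2 = (1 / \<beta>) *\<^sub>R (\<beta> *\<^sub>R v2)" using nb by simp
    also have "\<dots> = (- \<alpha> / \<beta>) *\<^sub>R v1" unfolding h by simp
    finally have "v2 = (- \<alpha> / \<beta>) *\<^sub>R v1" .
    then show ?thesis unfolding Av_def by simp
  qed
  then have "range (Av v1 v2) = {0}" by auto
  then show ?thesis by simp
qed

lemma dimA2:
  assumes ind: "\<And>\<alpha> \<beta>. \<alpha> *\<^sub>R v1 + \<beta> *\<^sub>R v2 = 0 \<Longrightarrow> \<alpha> = 0 \<and> \<beta> = 0"
  shows "dim (range (Av v1 v2)) = 2"
proof -
  have linA: "linear (Av v1 v2)" unfolding linear_iff Av_def
    by (simp add: inner_add_right algebra_simps)
  have sub: "subspace (range (Av v1 v2))" using linA by (metis linear_subspace_image subspace_UNIV)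
  define A where "A = v1 \<bullet> v1"
  define Bb where "Bb = v2 \<bullet> v2"
  define C where "C = v1 \<bullet> v2"
  have w1: "Av v1 v2 v2 = Bb *\<^sub>R v1 - C *\<^sub>R v2" unfolding Av_def Bb_def C_def by (simp add: inner_commute)
  have w2: "Av v1 v2 v1 = C *\<^sub>R v1 - A *\<^sub>R v2" unfolding Av_def A_def C_def by (simp add: inner_commute)
  have v2nz: "v2 \<noteq> 0" using ind[of 0 1] by auto
  have D: "A * Bb - C^2 \<noteq> 0"
  proof
    assume h: "A * Bb - C^2 = 0"
    have "(Bb *\<^sub>R v1 - C *\<^sub>R v2) \<bullet> (Bb *\<^sub>R v1 - C *\<^sub>R v2) = Bb * (A * Bb - C^2)"
      unfolding A_def Bb_def C_def by (simp add: inner_diff_left inner_diff_right inner_commute power2_eq_square algebra_simps)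
    then have "Bb *\<^sub>R v1 - C *\<^sub>R v2 = 0" using h by simp
    then have "Bb = 0" using ind[of Bb "-C"] by simp
    then show False using v2nz unfolding Bb_def by simp
  qed
  let ?D = "A * Bb - C^2"
  have e1: "A *\<^sub>R Av v1 v2 v2 - C *\<^sub>R Av v1 v2 v1 = ?D *\<^sub>R v1"
    unfolding w1 w2 by (simp add: scaleR_diff_right scaleR_diff_left power2_eq_square)
  have "v1 = (1/?D) *\<^sub>R (A *\<^sub>R Av v1 v2 v2 - C *\<^sub>R Av v1 v2 v1)"
    using D unfolding e1 by simp
  then have "v1 \<in> range (Av v1 v2)"
    by (metis rangeI sub subspace_diff subspace_mul)
  moreover have e2: "C *\<^sub>R Av v1 v2 v2 - Bb *\<^sub>R Av v1 v2 v1 = ?D *\<^sub>R v2"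
    unfolding w1 w2 by (simp add: scaleR_diff_right scaleR_diff_left power2_eq_square mult.commute[of C Bb] mult.commute[of Bb A])
  have "v2 = (1/?D) *\<^sub>R (C *\<^sub>R Av v1 v2 v2 - Bb *\<^sub>R Av v1 v2 v1)"
    using D unfolding e2 by simp
  then have "v2 \<in> range (Av v1 v2)"
    by (metis rangeI sub subspace_diff subspace_mul)
  ultimately have "span {v1, v2} \<subseteq> range (Av v1 v2)"
    using sub by (simp add: span_minimal)
  moreover have "range (Av v1 v2) \<subseteq> span {v1, v2}"
    unfolding Av_def by (intro image_subsetI span_diff span_mul span_base) auto
  ultimately have eq: "range (Av v1 v2) = span {v1, v2}" by auto
  have "v1 \<noteq> v2" using ind[of 1 "-1"] v2nz by auto
  have "independent {v1, v2}"
  proof (rule independent_insertI)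
    show "independent {v2}" using v2nz by simp
    show "v1 \<notin> span {v2}"
    proof
      assume "v1 \<in> span {v2}"
      then obtain k where "v1 = k *\<^sub>R v2" by (auto simp: span_singleton)
      then show False using ind[of 1 "-k"] by simp
    qed
  qed
  then have "dim (span {v1, v2}) = card {v1, v2}" by (rule dim_span_eq_card_independent)
  then show ?thesis unfolding eq using \<open>v1 \<noteq> v2\<close> by simp
qed

definition Pv :: "real^'n \<Rightarrow> real^'n \<Rightarrow> real^'n" where "Pv u x = x - (x \<bullet> u) *\<^sub>R u"
definition phi :: "real^'n \<Rightarrow> real^'n \<Rightarrow> real^'n \<Rightarrow> real" where "phi u x w = x \<bullet> w - (x \<bullet> u) * (w \<bullet> u)"
definition Rt :: "real^'n \<Rightarrow> real^'n \<Rightarrow> real^'n \<Rightarrow> real^'n \<Rightarrow> real^'n \<Rightarrow> real" where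
  "Rt u x y z w = phi u y z * phi u x w - phi u x z * phi u y w"

lemma phi_Pv: "phi u x w = Pv u x \<bullet> w"
  unfolding phi_def Pv_def by (simp add: inner_diff_left inner_diff_right inner_commute)

lemma phi_sym: "phi u x w = phi u w x"
  unfolding phi_def by (simp add: inner_commute)
lemma phi_add: "phi u (x + y) w = phi u x w + phi u y w"
  unfolding phi_def by (simp add: inner_add_left algebra_simps)
lemma phi_scale: "phi u (c *\<^sub>R x) w = c * phi u x w"
  unfolding phi_def by (simp add: algebra_simps)
lemma phi_add2: "phi u w (x + y) = phi u w x + phi u w y"
  using phi_add phi_sym by metis
lemma phi_scale2: "phi u w (c *\<^sub>R x) = c * phi u w x"
  using phi_scale phi_sym by metis

lemma Rt_act: "alg_curv_tensor (Rt u)"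
  unfolding alg_curv_tensor_def
proof (intro conjI allI)
  fix x y z w
  show "linear (\<lambda>x. Rt u x y z w)" "linear (\<lambda>y. Rt u x y z w)" "linear (\<lambda>z. Rt u x y z w)"
    "linear (\<lambda>w. Rt u x y z w)"
    unfolding linear_iff Rt_def by (simp_all add: phi_add phi_scale phi_add2 phi_scale2 algebra_simps)
  show "Rt u x y z w = Rt u z w x y" unfolding Rt_def
    by (simp add: phi_sym[of u x z] phi_sym[of u y z] phi_sym[of u x w] phi_sym[of u y w])
  show "Rt u x y z w = - Rt u y x z w" unfolding Rt_def by simp
  show "Rt u x y z w + Rt u y z x w + Rt u z x y w = 0" unfolding Rt_def
    by (simp add: phi_sym[of u z y] phi_sym[of u x z] phi_sym[of u y x] algebra_simps)
qed

lemma Rt_inner: "Rt u x y z w = w \<bullet> Av (Pv u x) (Pv u y) z"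
  unfolding Rt_def Av_def phi_Pv by (simp add: inner_diff_right inner_commute)

lemma Pv_lin: "Pv u (a *\<^sub>R x + b *\<^sub>R y) = a *\<^sub>R Pv u x + b *\<^sub>R Pv u y"
  unfolding Pv_def by (simp add: inner_add_left algebra_simps)

lemma rank_Rt:
  assumes sb: "symmetric_bilinear B" and nd: "nondeg B"
    and det: "B e1 e1 * B e2 e2 - (B e1 e2)^2 \<noteq> 0"
  shows "op_rank (plane_op B (Rt u) e1 e2) = dim (range (Av (Pv u e1) (Pv u e2)))"
proof -
  define cv where "cv = curv_op B (Rt u) e1 e2"
  define c where "c = \<bar>B e1 e1 * B e2 e2 - (B e1 e2)^2\<bar> powr (-1/2)"
  have c: "c \<noteq> 0" unfolding c_def using det by simp
  have Bcv: "Bop B (cv z) = Av (Pv u e1) (Pv u e2) z" for z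
    unfolding cv_def by (rule curv_op_eq[OF sb nd]) (rule Rt_inner)
  have r1: "range (Av (Pv u e1) (Pv u e2)) = Bop B ` range cv"
    using Bcv by (auto simp: image_iff)
  have "dim (Bop B ` range cv) = dim (range cv)"
    by (rule dim_image_eq[OF Bop_linear[OF sb]]) (meson Bop_inj[OF sb nd] inj_on_subset subset_UNIV)
  moreover have "range (plane_op B (Rt u) e1 e2) = scaleR c ` range cv"
    unfolding plane_op_def cv_def c_def by auto
  moreover have "dim (scaleR c ` range cv) = dim (range cv)"
    by (rule dim_image_eq) (auto simp: c inj_on_def)
  ultimately show ?thesis unfolding op_rank_def r1 by simp
qed


lemma span2: "v \<in> span {e1, e2} \<longleftrightarrow> (\<exists>a b. v = a *\<^sub>R e1 + b *\<^sub>R e2)"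
proof
  assume "v \<in> span {e1, e2}"
  then obtain k ka where "v - k *\<^sub>R e1 = ka *\<^sub>R e2" by (auto simp: span_insert span_singleton)
  then have "v = k *\<^sub>R e1 + ka *\<^sub>R e2" by (metis add.commute diff_add_cancel)
  then show "\<exists>a b. v = a *\<^sub>R e1 + b *\<^sub>R e2" by blast
next
  assume "\<exists>a b. v = a *\<^sub>R e1 + b *\<^sub>R e2"
  then obtain a b where ab: "v = a *\<^sub>R e1 + b *\<^sub>R e2" by blast
  have "e1 \<in> span {e1, e2}" "e2 \<in> span {e1, e2}" by (simp_all add: span_base)
  then show "v \<in> span {e1, e2}" unfolding ab by (simp add: span_add span_mul)
qed

lemma indep2:
  assumes "independent {e1, e2}" "e1 \<noteq> e2" "a *\<^sub>R e1 + b *\<^sub>R e2 = 0"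
  shows "a = 0 \<and> b = 0"
proof -
  have e2: "e2 \<noteq> 0" using assms(1) dependent_zero by blast
  have ns: "e1 \<notin> span {e2}" using assms(1,2) by (simp add: independent_insert)
  have "a = 0"
  proof (rule ccontr)
    assume "a \<noteq> 0"
    have "a *\<^sub>R e1 = (a *\<^sub>R e1 + b *\<^sub>R e2) - b *\<^sub>R e2" by simp
    also have "\<dots> = (- b) *\<^sub>R e2" using assms(3) by simp
    finally have h: "a *\<^sub>R e1 = (- b) *\<^sub>R e2" .
    have "e1 = (1 / a) *\<^sub>R (a *\<^sub>R e1)" using \<open>a \<noteq> 0\<close> by simp
    also have "\<dots> = (- b / a) *\<^sub>R e2" unfolding h by simp
    finally have eq: "e1 = (- b / a) *\<^sub>R e2" .
    have "(- b / a) *\<^sub>R e2 \<in> span {e2}" by (rule span_mul) (simp add: span_base)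
    then have "e1 \<in> span {e2}" unfolding eq .
    then show False using ns by simp
  qed
  then show ?thesis using assms(3) e2 by simp
qed

lemma sig_sub: "has_signature B S p q \<Longrightarrow> subspace S"
  unfolding has_signature_def by (elim conjE)

lemma sig_nd: "has_signature B S p q \<Longrightarrow> v \<in> S \<Longrightarrow> (\<forall>w\<in>S. B v w = 0) \<Longrightarrow> v = 0"
proof -
  assume h: "has_signature B S p q" "v \<in> S" "\<forall>w\<in>S. B v w = 0"
  from h(1) have "\<forall>v\<in>S. (\<forall>w\<in>S. B v w = 0) \<longrightarrow> v = 0" unfolding has_signature_def by (elim conjE)
  then show "v = 0" using h(2,3) by blast
qed

lemma sig_negmax:
  assumes "has_signature B S p q" "subspace W" "W \<subseteq> S" "neg_definite_on B W"
    "\<forall>W'. subspace W' \<and> W \<subseteq> W' \<and> W' \<subseteq> S \<and> neg_definite_on B W' \<longrightarrow> W' = W"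
  shows "dim W = p"
proof -
  from assms(1) have "\<forall>W. subspace W \<and> W \<subseteq> S \<and> neg_definite_on B W \<and>
          (\<forall>W'. subspace W' \<and> W \<subseteq> W' \<and> W' \<subseteq> S \<and> neg_definite_on B W' \<longrightarrow> W' = W)
          \<longrightarrow> dim W = p" unfolding has_signature_def by (elim conjE)
  then show ?thesis using assms(2-5) by blast
qed

lemma sig_posmax:
  assumes "has_signature B S p q" "subspace W" "W \<subseteq> S" "pos_definite_on B W"
    "\<forall>W'. subspace W' \<and> W \<subseteq> W' \<and> W' \<subseteq> S \<and> pos_definite_on B W' \<longrightarrow> W' = W"
  shows "dim W = q"
proof -
  from assms(1) have "\<forall>W. subspace W \<and> W \<subseteq> S \<and> pos_definite_on B W \<and>
          (\<forall>W'. subspace W' \<and> W \<subseteq> W' \<and> W' \<subseteq> S \<and> pos_definite_on B W' \<longrightarrow> W' = W)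
          \<longrightarrow> dim W = q" unfolding has_signature_def by (elim conjE)
  then show ?thesis using assms(2-5) by blast
qed

lemma sb_neg: "symmetric_bilinear B \<Longrightarrow> symmetric_bilinear (\<lambda>x y. - B x y)"
  unfolding symmetric_bilinear_def by (auto simp: linear_compose_neg)

lemma sig_neg: "has_signature (\<lambda>x y. - B x y) S q p = has_signature B S p q"
  unfolding has_signature_def neg_definite_on_def pos_definite_on_def by auto

context fixes B :: "real^'n \<Rightarrow> real^'n \<Rightarrow> real" assumes sb: "symmetric_bilinear B"
begin

lemma linl: "linear (\<lambda>x. B x y)" using sb unfolding symmetric_bilinear_def by auto
lemma linr: "linear (B x)" using sb unfolding symmetric_bilinear_def by auto
lemma Bsym: "B x y = B y x" using sb unfolding symmetric_bilinear_def by auto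

lemma Badd_l: "B (x + y) z = B x z + B y z" using linear_add[OF linl] .
lemma Badd_r: "B z (x + y) = B z x + B z y" using linear_add[OF linr] .
lemma Bscale_l: "B (c *\<^sub>R x) z = c * B x z" using linear_scale[OF linl] by simp
lemma Bscale_r: "B z (c *\<^sub>R x) = c * B z x" using linear_scale[OF linr] by simp
lemma Bdiff_l: "B (x - y) z = B x z - B y z" using linear_diff[OF linl] .
lemma Bdiff_r: "B z (x - y) = B z x - B z y" using linear_diff[OF linr] .
lemma Bzero_l: "B 0 z = 0" using linear_0[OF linl] .
lemma Bzero_r: "B z 0 = 0" using linear_0[OF linr] .
lemma Bneg_l: "B (- x) z = - B x z" using linear_neg[OF linl] .
lemma Bneg_r: "B z (- x) = - B z x" using linear_neg[OF linr] .

lemmas Bsimps = Badd_l Badd_r Bscale_l Bscale_r Bdiff_l Bdiff_r Bzero_l Bzero_r Bneg_l Bneg_r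

lemma negdef_line: "B v v < 0 \<Longrightarrow> neg_definite_on B (span {v})"
  unfolding neg_definite_on_def
proof (clarsimp simp: span_singleton Bsimps)
  fix a :: real assume "B v v < 0" "a \<noteq> 0"
  then have "a * a > 0" by (metis not_real_square_gt_zero)
  then show "a * (a * B v v) < 0" using \<open>B v v < 0\<close> by (metis mult.assoc mult_pos_neg)
qed

lemma posdef_line: "B v v > 0 \<Longrightarrow> pos_definite_on B (span {v})"
  unfolding pos_definite_on_def
proof (clarsimp simp: span_singleton Bsimps)
  fix a :: real assume "B v v > 0" "a \<noteq> 0"
  then have "a * a > 0" by (metis not_real_square_gt_zero)
  then show "a * (a * B v v) > 0" using \<open>B v v > 0\<close> by (metis mult.assoc mult_pos_pos)
qed

lemma semidef:
  assumes S: "subspace S" and psd: "\<forall>w\<in>S. B w w \<ge> 0" and v: "v \<in> S" "B v v = 0" and w: "w \<in> S"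
  shows "B v w = 0"
proof (rule ccontr)
  assume x: "B v w \<noteq> 0"
  define c where "c = B w w"
  have c0: "c \<ge> 0" using psd w c_def by auto
  have expand: "B (v + s *\<^sub>R w) (v + s *\<^sub>R w) = 2 * s * B v w + s^2 * c" for s
    using v(2) unfolding c_def by (simp add: Bsimps Bsym[of w v] power2_eq_square algebra_simps)
  have ge: "2 * s * B v w + s^2 * c \<ge> 0" for s
    using psd S v w expand[of s] by (metis subspace_add subspace_mul)
  show False
  proof (cases "c = 0")
    case True
    have "0 < (B v w)^2" using x by simp
    then show ?thesis using ge[of "- B v w"] True by (simp add: power2_eq_square)
  next
    case False
    then have cp: "c > 0" using c0 by simp
    define y where "y = B v w"
    have "2 * (- y / c) * y + (- y / c)^2 * c = - (y^2 / c)"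
      using cp by (simp add: power2_eq_square field_simps)
    moreover have "y^2 / c > 0" using cp x unfolding y_def by simp
    ultimately show ?thesis using ge[of "- y / c"] unfolding y_def by linarith
  qed
qed

end

lemma exists_max:
  fixes S W0 :: "(real^'n) set"
  assumes "subspace S" "subspace W0" "W0 \<subseteq> S" "D W0"
  shows "\<exists>W. subspace W \<and> W0 \<subseteq> W \<and> W \<subseteq> S \<and> D W \<and>
    (\<forall>W'. subspace W' \<and> W \<subseteq> W' \<and> W' \<subseteq> S \<and> D W' \<longrightarrow> W' = W)"
proof -
  define P where "P k \<longleftrightarrow> (\<exists>W. subspace W \<and> W0 \<subseteq> W \<and> W \<subseteq> S \<and> D W \<and> dim W = k)" for k
  have "P (dim W0)" using assms unfolding P_def by auto
  moreover have "\<forall>k. P k \<longrightarrow> k \<le> dim (UNIV :: (real^'n) set)"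
    unfolding P_def using dim_subset by blast
  ultimately obtain k where k: "P k" "\<forall>k'. P k' \<longrightarrow> k' \<le> k"
    using Nat.ex_has_greatest_nat[of P "dim W0" "dim (UNIV :: (real^'n) set)"] by blast
  then obtain W where W: "subspace W" "W0 \<subseteq> W" "W \<subseteq> S" "D W" "dim W = k" unfolding P_def by auto
  have "W' = W" if "subspace W'" "W \<subseteq> W'" "W' \<subseteq> S" "D W'" for W'
  proof -
    have "P (dim W')" unfolding P_def using that W by blast
    then have "dim W' \<le> dim W" using k W by auto
    then show ?thesis using subspace_dim_equal[of W W'] that W by auto
  qed
  then show ?thesis using W by blast
qed


context fixes B :: "real^'n \<Rightarrow> real^'n \<Rightarrow> real" assumes sb: "symmetric_bilinear B"
begin

lemma nonneg_of_sig:
  assumes sig: "has_signature B S 0 q" and v: "v \<in> S"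
  shows "B v v \<ge> 0"
proof (rule ccontr)
  assume "\<not> B v v \<ge> 0"
  then have neg: "B v v < 0" by simp
  have S: "subspace S" using sig by (rule sig_sub)
  have sub: "span {v} \<subseteq> S" using S v by (simp add: span_minimal)
  obtain W where W: "subspace W" "span {v} \<subseteq> W" "W \<subseteq> S" "neg_definite_on B W"
    "\<forall>W'. subspace W' \<and> W \<subseteq> W' \<and> W' \<subseteq> S \<and> neg_definite_on B W' \<longrightarrow> W' = W"
    using exists_max[of S "span {v}" "neg_definite_on B"] S sub negdef_line[OF sb neg] by (meson subspace_span)
  then have "dim W = 0" using sig_negmax[OF sig] by blast
  then have "W \<subseteq> {0}" by simp
  moreover have "v \<in> W" using W(2) span_base by blast
  moreover have "v \<noteq> 0" using neg Bzero_l[OF sb] by auto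
  ultimately show False by auto
qed

lemma posdef_of_sig:
  assumes sig: "has_signature B S 0 q" and v: "v \<in> S" "v \<noteq> 0"
  shows "B v v > 0"
proof (rule ccontr)
  assume "\<not> B v v > 0"
  then have z: "B v v = 0" using nonneg_of_sig[OF sig v(1)] by simp
  have S: "subspace S" using sig by (rule sig_sub)
  have "\<forall>w\<in>S. B v w = 0"
    using semidef[OF sb S _ v(1) z] nonneg_of_sig[OF sig] by blast
  then have "v = 0" using sig_nd[OF sig v(1)] by blast
  then show False using v by simp
qed

lemma det_of_sig:
  assumes sig: "has_signature B (span {e1, e2}) p q" and ind: "independent {e1, e2}" "e1 \<noteq> e2"
  shows "B e1 e1 * B e2 e2 - (B e1 e2)^2 \<noteq> 0"
proof
  assume det: "B e1 e1 * B e2 e2 - (B e1 e2)^2 = 0"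
  define a where "a = (if B e1 e1 = 0 \<and> B e1 e2 = 0 then 1 else B e1 e2)"
  define b where "b = (if B e1 e1 = 0 \<and> B e1 e2 = 0 then 0 else - B e1 e1)"
  have ab: "a \<noteq> 0 \<or> b \<noteq> 0" unfolding a_def b_def by auto
  define v where "v = a *\<^sub>R e1 + b *\<^sub>R e2"
  have Bv1: "B v e1 = a * B e1 e1 + b * B e1 e2" unfolding v_def using Bsym[OF sb, of e2 e1]
    by (simp add: Bsimps[OF sb])
  have Bv2: "B v e2 = a * B e1 e2 + b * B e2 e2" unfolding v_def
    by (simp add: Bsimps[OF sb])
  have h1: "B v e1 = 0"
  proof (cases "B e1 e1 = 0 \<and> B e1 e2 = 0")
    case True then show ?thesis unfolding Bv1 a_def b_def by simp
  next
    case False then show ?thesis unfolding Bv1 a_def b_def by (simp add: mult.commute)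
  qed
  have h2: "B v e2 = 0"
  proof (cases "B e1 e1 = 0 \<and> B e1 e2 = 0")
    case True then show ?thesis unfolding Bv2 a_def b_def by simp
  next
    case False
    have "a * B e1 e2 + b * B e2 e2 = (B e1 e2)^2 - B e1 e1 * B e2 e2"
      unfolding a_def b_def using False by (simp add: power2_eq_square)
    then show ?thesis unfolding Bv2 using det by simp
  qed
  have "\<forall>w\<in>span {e1, e2}. B v w = 0"
  proof
    fix w assume "w \<in> span {e1, e2}"
    then obtain c d where w: "w = c *\<^sub>R e1 + d *\<^sub>R e2" unfolding span2 by blast
    show "B v w = 0" unfolding w using h1 h2 by (simp add: Bsimps[OF sb])
  qed
  moreover have "v \<in> span {e1, e2}" unfolding v_def span2 by blast
  ultimately have "v = 0" using sig_nd[OF sig] by blast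
  then have "a *\<^sub>R e1 + b *\<^sub>R e2 = 0" unfolding v_def .
  from indep2[OF ind this] ab show False by simp
qed

lemma sig_of_posdef:
  assumes S: "subspace S" and pd: "pos_definite_on B S"
  shows "has_signature B S 0 (dim S)"
  unfolding has_signature_def
proof (intro conjI allI impI ballI)
  show "subspace S" by fact
  fix v assume "v \<in> S" "\<forall>w\<in>S. B v w = 0"
  then show "v = 0" using pd unfolding pos_definite_on_def by fastforce
next
  fix W assume W: "subspace W \<and> W \<subseteq> S \<and> neg_definite_on B W \<and>
          (\<forall>W'. subspace W' \<and> W \<subseteq> W' \<and> W' \<subseteq> S \<and> neg_definite_on B W' \<longrightarrow> W' = W)"
  then have "W \<subseteq> {0}" using pd unfolding pos_definite_on_def neg_definite_on_def by force
  then show "dim W = 0" by simp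
next
  fix W assume W: "subspace W \<and> W \<subseteq> S \<and> pos_definite_on B W \<and>
          (\<forall>W'. subspace W' \<and> W \<subseteq> W' \<and> W' \<subseteq> S \<and> pos_definite_on B W' \<longrightarrow> W' = W)"
  then have "S = W" using S pd by blast
  then show "dim W = dim S" by simp
qed

lemma orth_indep:
  assumes "B e1 e1 \<noteq> 0" "B e2 e2 \<noteq> 0" "B e1 e2 = 0"
  shows "e1 \<noteq> e2 \<and> independent {e1, e2}"
proof
  show "e1 \<noteq> e2" using assms by auto
  show "independent {e1, e2}"
  proof (rule independent_insertI)
    show "independent {e2}" using assms(2) Bzero_l[OF sb] by auto
    show "e1 \<notin> span {e2}"
    proof
      assume "e1 \<in> span {e2}"
      then obtain k where "e1 = k *\<^sub>R e2" by (auto simp: span_singleton)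
      then have "B e1 e1 = k * B e1 e2" using Bsym[OF sb, of e1 e2] by (simp add: Bsimps[OF sb])
      then show False using assms by simp
    qed
  qed
qed

lemma dim_orth2:
  assumes "B e1 e1 \<noteq> 0" "B e2 e2 \<noteq> 0" "B e1 e2 = 0"
  shows "dim (span {e1, e2}) = 2"
proof -
  have "dim (span {e1, e2}) = card {e1, e2}"
    using orth_indep[OF assms] dim_span_eq_card_independent by blast
  then show ?thesis using orth_indep[OF assms] by simp
qed

lemma posplane:
  assumes "B e1 e1 > 0" "B e2 e2 > 0" "B e1 e2 = 0"
  shows "has_signature B (span {e1, e2}) 0 2"
proof -
  have "pos_definite_on B (span {e1, e2})"
    unfolding pos_definite_on_def
  proof (intro ballI impI)
    fix v assume "v \<in> span {e1, e2}" "v \<noteq> 0"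
    then obtain a b where v0: "v = a *\<^sub>R e1 + b *\<^sub>R e2" by (auto simp: span2)
    then have v: "v = a *\<^sub>R e1 + b *\<^sub>R e2" "a \<noteq> 0 \<or> b \<noteq> 0" using \<open>v \<noteq> 0\<close> by auto
    have "B v v = a^2 * B e1 e1 + b^2 * B e2 e2" unfolding v using assms(3) Bsym[OF sb, of e2 e1]
      by (simp add: Bsimps[OF sb] power2_eq_square algebra_simps)
    moreover have "a^2 * B e1 e1 + b^2 * B e2 e2 > 0"
    proof -
      have "a^2 * B e1 e1 \<ge> 0" "b^2 * B e2 e2 \<ge> 0" using assms by simp_all
      moreover have "a \<noteq> 0 \<Longrightarrow> a^2 * B e1 e1 > 0" using assms by simp
      moreover have "b \<noteq> 0 \<Longrightarrow> b^2 * B e2 e2 > 0" using assms by simp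
      ultimately show ?thesis using v(2) by linarith
    qed
    ultimately show "B v v > 0" by simp
  qed
  then show ?thesis using sig_of_posdef[OF subspace_span] dim_orth2 assms by force
qed

lemma dim1_max:
  fixes S W :: "(real^'n) set"
  assumes S: "subspace S" "dim S = 2" and W: "subspace W" "W \<subseteq> S"
    and mx: "\<forall>W'. subspace W' \<and> W \<subseteq> W' \<and> W' \<subseteq> S \<and> D W' \<longrightarrow> W' = W"
    and x: "D (span {x})" "x \<in> S" "x \<noteq> 0" and y: "y \<in> S" "y \<notin> W"
  shows "dim W = 1"
proof -
  have "dim W \<le> 2" using dim_subset[OF W(2)] S by simp
  moreover have "dim W \<noteq> 2"
  proof
    assume "dim W = 2"
    then have "W = S" using subspace_dim_equal[OF W(1) S(1) W(2)] S by simp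
    then show False using y by simp
  qed
  moreover have "dim W \<noteq> 0"
  proof
    assume "dim W = 0"
    then have "W \<subseteq> {0}" by simp
    then have "W \<subseteq> span {x}" by (auto simp: span_zero)
    moreover have "span {x} \<subseteq> S" using S x by (simp add: span_minimal)
    ultimately have "span {x} = W" using mx x by blast
    then have "x \<in> W" using span_base by blast
    then show False using \<open>W \<subseteq> {0}\<close> x by auto
  qed
  ultimately show ?thesis by linarith
qed

lemma mixedplane:
  assumes n: "B e1 e1 < 0" and p: "B e2 e2 > 0" and o: "B e1 e2 = 0"
  shows "has_signature B (span {e1, e2}) 1 1"
  unfolding has_signature_def
proof (intro conjI allI impI ballI)
  let ?S = "span {e1, e2}"
  have d2: "dim ?S = 2" using dim_orth2 n p o by force
  have e1S: "e1 \<in> ?S" and e2S: "e2 \<in> ?S" by (simp_all add: span_base)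
  have e1nz: "e1 \<noteq> 0" and e2nz: "e2 \<noteq> 0" using n p Bzero_l[OF sb] by auto
  show "subspace ?S" by simp
  fix v assume v: "v \<in> ?S" "\<forall>w\<in>?S. B v w = 0"
  then obtain a b where ab: "v = a *\<^sub>R e1 + b *\<^sub>R e2" by (auto simp: span2)
  have "B v e1 = a * B e1 e1" "B v e2 = b * B e2 e2" unfolding ab using o Bsym[OF sb, of e2 e1]
    by (simp_all add: Bsimps[OF sb])
  then have "a = 0" "b = 0" using v(2) e1S e2S n p by auto
  then show "v = 0" using ab by simp
next
  let ?S = "span {e1, e2}"
  have d2: "dim ?S = 2" using dim_orth2 n p o by force
  have e1S: "e1 \<in> ?S" and e2S: "e2 \<in> ?S" by (simp_all add: span_base)
  have e1nz: "e1 \<noteq> 0" and e2nz: "e2 \<noteq> 0" using n p Bzero_l[OF sb] by auto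
  fix W assume W: "subspace W \<and> W \<subseteq> ?S \<and> neg_definite_on B W \<and>
          (\<forall>W'. subspace W' \<and> W \<subseteq> W' \<and> W' \<subseteq> ?S \<and> neg_definite_on B W' \<longrightarrow> W' = W)"
  have "e2 \<notin> W" using W p e2nz unfolding neg_definite_on_def by force
  then show "dim W = 1"
    using dim1_max[of ?S W "neg_definite_on B" e1 e2] W d2 negdef_line[OF sb n] e1S e1nz e2S by auto
next
  let ?S = "span {e1, e2}"
  have d2: "dim ?S = 2" using dim_orth2 n p o by force
  have e1S: "e1 \<in> ?S" and e2S: "e2 \<in> ?S" by (simp_all add: span_base)
  have e1nz: "e1 \<noteq> 0" and e2nz: "e2 \<noteq> 0" using n p Bzero_l[OF sb] by auto
  fix W assume W: "subspace W \<and> W \<subseteq> ?S \<and> pos_definite_on B W \<and>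
          (\<forall>W'. subspace W' \<and> W \<subseteq> W' \<and> W' \<subseteq> ?S \<and> pos_definite_on B W' \<longrightarrow> W' = W)"
  have "e1 \<notin> W" using W n e1nz unfolding pos_definite_on_def by force
  then show "dim W = 1"
    using dim1_max[of ?S W "pos_definite_on B" e2 e1] W d2 posdef_line[OF sb p] e2S e2nz e1S by auto
qed

end


lemma rank_by_span:
  assumes sb: "symmetric_bilinear B" and nd: "nondeg B"
    and sig: "has_signature B (span {e1, e2}) p q" and ind: "independent {e1, e2}" "e1 \<noteq> e2"
    and x: "x \<noteq> 0"
  shows "op_rank (plane_op B (Rt (x /\<^sub>R norm x)) e1 e2) = (if x \<in> span {e1, e2} then 0 else 2)"
proof -
  define u where "u = x /\<^sub>R norm x"
  have r: "op_rank (plane_op B (Rt u) e1 e2) = dim (range (Av (Pv u e1) (Pv u e2)))"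
    by (rule rank_Rt[OF sb nd det_of_sig[OF sb sig ind]])
  have nx: "norm x \<noteq> 0" using x by simp
  have Px: "Pv u x = 0"
  proof -
    have "x \<bullet> u = norm x" unfolding u_def using nx
      by (simp add: power2_norm_eq_inner[symmetric] power2_eq_square)
    then show ?thesis unfolding Pv_def u_def using nx by simp
  qed
  show ?thesis
  proof (cases "x \<in> span {e1, e2}")
    case True
    then obtain a b where ab: "x = a *\<^sub>R e1 + b *\<^sub>R e2" by (auto simp: span2)
    then have "a \<noteq> 0 \<or> b \<noteq> 0" using x by auto
    moreover have "a *\<^sub>R Pv u e1 + b *\<^sub>R Pv u e2 = 0" using Px unfolding ab Pv_lin by simp
    ultimately have "dim (range (Av (Pv u e1) (Pv u e2))) = 0" by (rule dimA0)
    then show ?thesis using r True unfolding u_def by simp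
  next
    case False
    have "\<alpha> = 0 \<and> \<beta> = 0" if h: "\<alpha> *\<^sub>R Pv u e1 + \<beta> *\<^sub>R Pv u e2 = 0" for \<alpha> \<beta>
    proof -
      define v where "v = \<alpha> *\<^sub>R e1 + \<beta> *\<^sub>R e2"
      have "Pv u v = 0" using h unfolding v_def Pv_lin .
      then have v: "v = (v \<bullet> u) *\<^sub>R u" unfolding Pv_def by (simp add: algebra_simps)
      show ?thesis
      proof (cases "v \<bullet> u = 0")
        case True
        then have "v = 0" using v by simp
        then show ?thesis using indep2[OF ind] unfolding v_def by blast
      next
        case False
        have vS: "v \<in> span {e1, e2}" unfolding v_def span2 by blast
        have "x = (norm x / (v \<bullet> u)) *\<^sub>R v"
          using False nx by (subst v) (simp add: u_def)
        then have "x \<in> span {e1, e2}" using vS by (metis span_mul)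
        then show ?thesis using \<open>x \<notin> span {e1, e2}\<close> by simp
      qed
    qed
    then have "dim (range (Av (Pv u e1) (Pv u e2))) = 2" by (rule dimA2) blast
    then show ?thesis using r False unfolding u_def by simp
  qed
qed


lemma gs:
  fixes B :: "real^'n \<Rightarrow> real^'n \<Rightarrow> real"
  assumes sb: "symmetric_bilinear B" and S: "subspace S" and d: "dim S \<ge> 2" and pd: "pos_definite_on B S"
  shows "\<exists>a b. a \<in> S \<and> b \<in> S \<and> B a a = 1 \<and> B b b = 1 \<and> B a b = 0"
proof -
  obtain Bs where Bs: "Bs \<subseteq> S" "independent Bs" "S \<subseteq> span Bs" "card Bs = dim S"
    by (rule basis_exists)
  then have c2: "2 \<le> card Bs" using d by simp
  then have fin: "finite Bs" by (metis card.infinite not_numeral_le_zero)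
  obtain a0 where a0: "a0 \<in> Bs" using c2 by (metis card.empty ex_in_conv not_numeral_le_zero)
  have "card (Bs - {a0}) \<ge> 1" using c2 a0 fin by (simp add: card_Diff_singleton)
  then obtain b0 where b0: "b0 \<in> Bs - {a0}" by (metis card.empty ex_in_conv not_one_le_zero)
  have ab0: "a0 \<in> Bs" "b0 \<in> Bs" "a0 \<noteq> b0" using a0 b0 by auto
  have ind: "independent {a0, b0}" using Bs(2) ab0 by (meson empty_subsetI independent_mono insert_subset)
  have a0S: "a0 \<in> S" and b0S: "b0 \<in> S" using ab0 Bs by auto
  have a0nz: "a0 \<noteq> 0" using ind dependent_zero by blast
  have pa: "B a0 a0 > 0" using pd a0S a0nz unfolding pos_definite_on_def by blast
  define k where "k = B a0 b0 / B a0 a0"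
  define b1 where "b1 = b0 - k *\<^sub>R a0"
  have b1S: "b1 \<in> S" unfolding b1_def using S a0S b0S by (simp add: subspace_diff subspace_mul)
  have b1nz: "b1 \<noteq> 0"
  proof
    assume "b1 = 0"
    then have "(- k) *\<^sub>R a0 + 1 *\<^sub>R b0 = 0" unfolding b1_def by (simp add: algebra_simps)
    from indep2[OF ind ab0(3) this] show False by simp
  qed
  have pb: "B b1 b1 > 0" using pd b1S b1nz unfolding pos_definite_on_def by blast
  have o: "B a0 b1 = 0" unfolding b1_def k_def using pa by (simp add: Bsimps[OF sb])
  define a where "a = (1 / sqrt (B a0 a0)) *\<^sub>R a0"
  define b where "b = (1 / sqrt (B b1 b1)) *\<^sub>R b1"
  have "a \<in> S" "b \<in> S" unfolding a_def b_def using S a0S b1S by (simp_all add: subspace_mul)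
  moreover have "B a a = 1"
  proof -
    have "B a a = B a0 a0 / (sqrt (B a0 a0) * sqrt (B a0 a0))" unfolding a_def by (simp add: Bsimps[OF sb])
    also have "\<dots> = 1" using pa by simp
    finally show ?thesis .
  qed
  moreover have "B b b = 1"
  proof -
    have "B b b = B b1 b1 / (sqrt (B b1 b1) * sqrt (B b1 b1))" unfolding b_def by (simp add: Bsimps[OF sb])
    also have "\<dots> = 1" using pb by simp
    finally show ?thesis .
  qed
  moreover have "B a b = 0" unfolding a_def b_def using o by (simp add: Bsimps[OF sb])
  ultimately show ?thesis by blast
qed


lemma frame:
  fixes B :: "real^'n \<Rightarrow> real^'n \<Rightarrow> real"
  assumes ip: "inner_product_sig B p q" and p2: "p \<ge> 2" and q2: "q \<ge> 2"
  shows "\<exists>t1 t2 s1 s2. B t1 t1 = -1 \<and> B t2 t2 = -1 \<and> B s1 s1 = 1 \<and> B s2 s2 = 1 \<and>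
    B t1 t2 = 0 \<and> B s1 s2 = 0 \<and> B t1 s1 = 0 \<and> B t1 s2 = 0 \<and> B t2 s1 = 0 \<and> B t2 s2 = 0"
proof -
  have sb: "symmetric_bilinear B" and sig: "has_signature B UNIV p q"
    using ip unfolding inner_product_sig_def by auto
  have nd: "nondeg B" using sig_nd[OF sig] unfolding nondeg_def by blast
  note Bs = Bsimps[OF sb]
  have z: "subspace {0::real^'n}" by (simp add: subspace_single_0)
  obtain T where T: "subspace T" "neg_definite_on B T"
    "\<forall>W'. subspace W' \<and> T \<subseteq> W' \<and> neg_definite_on B W' \<longrightarrow> W' = T"
    using exists_max[of UNIV "{0}" "neg_definite_on B"] z
    by (auto simp: neg_definite_on_def)
  have dT: "dim T = p" using sig_negmax[OF sig T(1) _ T(2)] T(3) by blast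
  obtain W where W: "subspace W" "pos_definite_on B W"
    "\<forall>W'. subspace W' \<and> W \<subseteq> W' \<and> pos_definite_on B W' \<longrightarrow> W' = W"
    using exists_max[of UNIV "{0}" "pos_definite_on B"] z
    by (auto simp: pos_definite_on_def)
  have dW: "dim W = q" using sig_posmax[OF sig W(1) _ W(2)] W(3) by blast
  have TW: "T \<inter> W \<subseteq> {0}" using T(2) W(2) unfolding neg_definite_on_def pos_definite_on_def by force
  define N where "N = dim (UNIV :: (real^'n) set)"
  have "dim {x + y |x y. x \<in> T \<and> y \<in> W} \<le> N" unfolding N_def by (rule dim_subset) simp
  moreover have "dim (T \<inter> W) = 0" using TW by simp
  ultimately have pqN: "p + q \<le> N" using dim_sums_Int[OF T(1) W(1)] dT dW by linarith
  define Tp where "Tp = {y. \<forall>x\<in>T. B x y = 0}"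
  have Tp_eq: "Tp = {y. \<forall>x\<in>Bop B ` T. orthogonal x y}"
    unfolding Tp_def orthogonal_def using Bop_inner[OF sb] Bsym[OF sb]
    by (auto simp: inner_commute)
  have subBT: "subspace (Bop B ` T)" using T(1) Bop_linear[OF sb] by (metis linear_subspace_image)
  have "dim (Bop B ` T) = dim T"
    by (rule dim_image_eq[OF Bop_linear[OF sb]]) (meson Bop_inj[OF sb nd] inj_on_subset subset_UNIV)
  then have dTp: "dim Tp + p = N"
    using dim_subspace_orthogonal_to_vectors[OF subBT subspace_UNIV subset_UNIV] dT
    unfolding Tp_eq N_def by simp
  have sTp: "subspace Tp" unfolding Tp_def subspace_def by (simp add: Bs)
  have Tneg: "B t t \<le> 0" if "t \<in> T" for t
    using T(2) that Bs by (cases "t = 0") (auto simp: neg_definite_on_def less_imp_le)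
  have Tpnn: "B y y \<ge> 0" if y: "y \<in> Tp" for y
  proof (rule ccontr)
    assume "\<not> B y y \<ge> 0"
    then have yn: "B y y < 0" by simp
    define T' where "T' = span (insert y T)"
    have sT': "subspace T'" unfolding T'_def by simp
    have TT': "T \<subseteq> T'" unfolding T'_def by (meson span_superset subset_insertI subset_trans)
    have "neg_definite_on B T'" unfolding neg_definite_on_def
    proof (intro ballI impI)
      fix z assume z: "z \<in> T'" "z \<noteq> 0"
      then obtain k where k0: "z - k *\<^sub>R y \<in> span T" unfolding T'_def span_insert by blast
      then have k: "z - k *\<^sub>R y \<in> T" using T(1) by (simp add: span_eq_iff[THEN iffD2])
      define t where "t = z - k *\<^sub>R y"
      have zt: "z = t + k *\<^sub>R y" unfolding t_def by simp
      have "B t y = 0" using y k unfolding Tp_def t_def by blast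
      then have "B z z = B t t + k^2 * B y y" unfolding zt using Bsym[OF sb, of y t]
        by (simp add: Bs power2_eq_square algebra_simps)
      moreover have "B t t \<le> 0" using Tneg k t_def by simp
      moreover have "k \<noteq> 0 \<Longrightarrow> k^2 * B y y < 0" using yn by (simp add: mult_pos_neg)
      moreover have "k = 0 \<Longrightarrow> B t t < 0" using z T(2) k unfolding t_def neg_definite_on_def by auto
      ultimately show "B z z < 0" by (cases "k = 0") auto
    qed
    then have "T' = T" using T(3) sT' TT' by blast
    then have "y \<in> T" unfolding T'_def by (metis insert_subset span_superset)
    then have "B y y = 0" using y unfolding Tp_def by blast
    then show False using yn by simp
  qed
  have TTp: "T \<inter> Tp \<subseteq> {0}" using T(2) unfolding Tp_def neg_definite_on_def by force
  have full: "{x + y |x y. x \<in> T \<and> y \<in> Tp} = UNIV"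
  proof -
    have "dim (T \<inter> Tp) = 0" using TTp by simp
    then have "dim {x + y |x y. x \<in> T \<and> y \<in> Tp} = N"
      using dim_sums_Int[OF T(1) sTp] dT dTp by linarith
    then have "span {x + y |x y. x \<in> T \<and> y \<in> Tp} = UNIV" unfolding N_def
      using dim_eq_full[of "{x + y |x y. x \<in> T \<and> y \<in> Tp}"] by simp
    then show ?thesis using span_eq_iff[THEN iffD2, OF subspace_sums[OF T(1) sTp]] by simp
  qed
  have Tppd: "pos_definite_on B Tp" unfolding pos_definite_on_def
  proof (intro ballI impI)
    fix y assume y: "y \<in> Tp" "y \<noteq> 0"
    show "B y y > 0"
    proof (rule ccontr)
      assume "\<not> B y y > 0"
      then have y0: "B y y = 0" using Tpnn y by force
      have "B y w = 0" for w
      proof -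
        obtain t z where w: "w = t + z" "t \<in> T" "z \<in> Tp" using full by blast
        have "B y z = 0" using semidef[OF sb sTp _ y(1) y0 w(3)] Tpnn by blast
        moreover have "B y t = 0" using y(1) w(2) Bsym[OF sb, of y t] unfolding Tp_def by auto
        ultimately show ?thesis unfolding w by (simp add: Bs)
      qed
      then have "y = 0" using nd unfolding nondeg_def by blast
      then show False using y by simp
    qed
  qed
  have "dim Tp \<ge> 2" using dTp pqN q2 by linarith
  then obtain s1 s2 where s: "s1 \<in> Tp" "s2 \<in> Tp" "B s1 s1 = 1" "B s2 s2 = 1" "B s1 s2 = 0"
    using gs[OF sb sTp _ Tppd] by blast
  have "pos_definite_on (\<lambda>x y. - B x y) T" using T(2)
    unfolding pos_definite_on_def neg_definite_on_def by auto
  moreover have "dim T \<ge> 2" using dT p2 by simp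
  ultimately obtain t1 t2 where t: "t1 \<in> T" "t2 \<in> T" "- B t1 t1 = 1" "- B t2 t2 = 1" "- B t1 t2 = 0"
    using gs[OF sb_neg[OF sb] T(1)] by blast
  have "B t1 s1 = 0" "B t1 s2 = 0" "B t2 s1 = 0" "B t2 s2 = 0"
    using s t unfolding Tp_def by auto
  then show ?thesis using s t by (intro exI[of _ t1] exI[of _ t2] exI[of _ s1] exI[of _ s2]) auto
qed


lemma negplane:
  fixes B :: "real^'n \<Rightarrow> real^'n \<Rightarrow> real"
  assumes sb: "symmetric_bilinear B" and "B e1 e1 < 0" "B e2 e2 < 0" "B e1 e2 = 0"
  shows "has_signature B (span {e1, e2}) 2 0"
  using posplane[OF sb_neg[OF sb], of e1 e2] assms sig_neg[of B "span {e1, e2}" 0 2] by simp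

lemma univ_part:
  assumes sb: "symmetric_bilinear B" and nd: "nondeg B" and x: "x \<noteq> 0"
    and h: "\<And>e1 e2. e1 \<noteq> e2 \<Longrightarrow> independent {e1, e2} \<Longrightarrow> has_signature B (span {e1, e2}) a b
       \<Longrightarrow> x \<notin> span {e1, e2}"
  shows "rank_on_planes B a b (Rt (x /\<^sub>R norm x)) 2"
  unfolding rank_on_planes_def
  using rank_by_span[OF sb nd _ _ _ x] h by auto

lemma nonconst:
  assumes sb: "symmetric_bilinear B" and nd: "nondeg B" and x: "x \<noteq> 0"
    and P1: "e1 \<noteq> e2" "independent {e1, e2}" "has_signature B (span {e1, e2}) a b" "x \<in> span {e1, e2}"
    and P2: "f1 \<noteq> f2" "independent {f1, f2}" "has_signature B (span {f1, f2}) a b" "x \<notin> span {f1, f2}"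
  shows "\<not> (\<exists>r. rank_on_planes B a b (Rt (x /\<^sub>R norm x)) r)"
proof
  assume "\<exists>r. rank_on_planes B a b (Rt (x /\<^sub>R norm x)) r"
  then obtain r where r: "rank_on_planes B a b (Rt (x /\<^sub>R norm x)) r" by blast
  have "r = 0" using r P1 rank_by_span[OF sb nd P1(3) P1(2) P1(1) x] unfolding rank_on_planes_def by auto
  moreover have "r = 2" using r P2 rank_by_span[OF sb nd P2(3) P2(2) P2(1) x] unfolding rank_on_planes_def by auto
  ultimately show False by simp
qed

theorem lemma2p2:
  fixes B :: "real^'n \<Rightarrow> real^'n \<Rightarrow> real" and p q :: nat
  assumes "inner_product_sig B p q" and "p \<ge> 2" and "q \<ge> 2"
  shows "(\<exists>R. alg_curv_tensor R \<and> spacelike_rank B R 2 \<and>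
             \<not> const_timelike_rank B R \<and> \<not> const_mixed_rank B R)
       \<and> (\<exists>R. alg_curv_tensor R \<and> timelike_rank B R 2 \<and>
             \<not> const_spacelike_rank B R \<and> \<not> const_mixed_rank B R)
       \<and> (\<exists>R. alg_curv_tensor R \<and> spacelike_rank B R 2 \<and> timelike_rank B R 2 \<and>
             \<not> const_mixed_rank B R)"
proof -
  have sb: "symmetric_bilinear B" and sig: "has_signature B UNIV p q"
    using assms(1) unfolding inner_product_sig_def by auto
  have nd: "nondeg B" using sig_nd[OF sig] unfolding nondeg_def by blast
  note Bs = Bsimps[OF sb]
  obtain t1 t2 s1 s2 where f: "B t1 t1 = -1" "B t2 t2 = -1" "B s1 s1 = 1" "B s2 s2 = 1"
    "B t1 t2 = 0" "B s1 s2 = 0" "B t1 s1 = 0" "B t1 s2 = 0" "B t2 s1 = 0" "B t2 s2 = 0"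
    using frame[OF assms] by blast
  have f': "B t2 t1 = 0" "B s2 s1 = 0" "B s1 t1 = 0" "B s2 t1 = 0" "B s1 t2 = 0" "B s2 t2 = 0"
    using f Bsym[OF sb] by metis+
  note ff = f f'
  have nz: "t1 \<noteq> 0" "s1 \<noteq> 0" using f Bs by auto
  have sp: "x \<in> span {x, y}" "y \<in> span {x, y}" for x y :: "real^'n" by (simp_all add: span_base)
  have i_t1t2: "t1 \<noteq> t2 \<and> independent {t1, t2}" using orth_indep[OF sb] ff by simp
  have g_t1t2: "has_signature B (span {t1, t2}) 2 0" using negplane[OF sb] ff by simp
  have i_t1s1: "t1 \<noteq> s1 \<and> independent {t1, s1}" using orth_indep[OF sb] ff by simp
  have g_t1s1: "has_signature B (span {t1, s1}) 1 1" using mixedplane[OF sb] ff by simp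
  have i_t2s1: "t2 \<noteq> s1 \<and> independent {t2, s1}" using orth_indep[OF sb] ff by simp
  have g_t2s1: "has_signature B (span {t2, s1}) 1 1" using mixedplane[OF sb] ff by simp
  have i_t1s2: "t1 \<noteq> s2 \<and> independent {t1, s2}" using orth_indep[OF sb] ff by simp
  have g_t1s2: "has_signature B (span {t1, s2}) 1 1" using mixedplane[OF sb] ff by simp
  have i_t2s2: "t2 \<noteq> s2 \<and> independent {t2, s2}" using orth_indep[OF sb] ff by simp
  have g_t2s2: "has_signature B (span {t2, s2}) 1 1" using mixedplane[OF sb] ff by simp
  have i_s1s2: "s1 \<noteq> s2 \<and> independent {s1, s2}" using orth_indep[OF sb] ff by simp
  have g_s1s2: "has_signature B (span {s1, s2}) 0 2" using posplane[OF sb] ff by simp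
  define v where "v = 2 *\<^sub>R t1 + s1"
  have v: "B v v = -3" "B t2 v = 0" "B v t2 = 0" "B s1 v = 1" unfolding v_def using ff by (simp_all add: Bs)
  have i_t2v: "t2 \<noteq> v \<and> independent {t2, v}" using orth_indep[OF sb] v ff by simp
  have g_t2v: "has_signature B (span {t2, v}) 2 0" using negplane[OF sb] v ff by simp
  define w where "w = 2 *\<^sub>R s1 + t1"
  have w: "B w w = 3" "B s2 w = 0" "B w s2 = 0" "B t1 w = -1" unfolding w_def using ff by (simp_all add: Bs)
  have i_s2w: "s2 \<noteq> w \<and> independent {s2, w}" using orth_indep[OF sb] w ff by simp
  have g_s2w: "has_signature B (span {s2, w}) 0 2" using posplane[OF sb] w ff by simp
  have part1: "\<exists>R. alg_curv_tensor R \<and> spacelike_rank B R 2 \<and>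
             \<not> const_timelike_rank B R \<and> \<not> const_mixed_rank B R"
  proof (intro exI conjI)
    let ?R = "Rt (t1 /\<^sub>R norm t1)"
    show "alg_curv_tensor ?R" by (rule Rt_act)
    show "spacelike_rank B ?R 2" unfolding spacelike_rank_def
      by (rule univ_part[OF sb nd nz(1)]) (use nonneg_of_sig[OF sb] f in force)
    have "t1 \<notin> span {t2, v}"
    proof
      assume "t1 \<in> span {t2, v}"
      then obtain a b where ab: "t1 = a *\<^sub>R t2 + b *\<^sub>R v" by (auto simp: span2)
      have "B s1 t1 = b" using v ff unfolding ab by (simp add: Bs)
      then have "b = 0" using ff by simp
      then have "B t1 t1 = 0" using ff unfolding ab by (simp add: Bs)
      then show False using ff by simp
    qed
    then show "\<not> const_timelike_rank B ?R" unfolding const_timelike_rank_def timelike_rank_def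
      using nonconst[OF sb nd nz(1)] i_t1t2 g_t1t2 i_t2v g_t2v sp by blast
    have "t1 \<notin> span {t2, s1}"
    proof
      assume "t1 \<in> span {t2, s1}"
      then obtain a b where ab: "t1 = a *\<^sub>R t2 + b *\<^sub>R s1" by (auto simp: span2)
      have "B t1 t1 = 0" using ff by (subst (2) ab) (simp add: Bs)
      then show False using ff by simp
    qed
    then show "\<not> const_mixed_rank B ?R" unfolding const_mixed_rank_def mixed_rank_def
      using nonconst[OF sb nd nz(1)] i_t1s1 g_t1s1 i_t2s1 g_t2s1 sp by blast
  qed
  have part2: "\<exists>R. alg_curv_tensor R \<and> timelike_rank B R 2 \<and>
             \<not> const_spacelike_rank B R \<and> \<not> const_mixed_rank B R"
  proof (intro exI conjI)
    let ?R = "Rt (s1 /\<^sub>R norm s1)"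
    show "alg_curv_tensor ?R" by (rule Rt_act)
    show "timelike_rank B ?R 2" unfolding timelike_rank_def
    proof (rule univ_part[OF sb nd nz(2)])
      fix e1 e2 assume "has_signature B (span {e1, e2}) 2 0"
      then have "has_signature (\<lambda>x y. - B x y) (span {e1, e2}) 0 2" using sig_neg by metis
      then show "s1 \<notin> span {e1, e2}" using nonneg_of_sig[OF sb_neg[OF sb]] f by force
    qed
    have "s1 \<notin> span {s2, w}"
    proof
      assume "s1 \<in> span {s2, w}"
      then obtain a b where ab: "s1 = a *\<^sub>R s2 + b *\<^sub>R w" by (auto simp: span2)
      have "B t1 s1 = - b" using w ff unfolding ab by (simp add: Bs)
      then have "b = 0" using ff by simp
      then have "B s1 s1 = 0" using ff unfolding ab by (simp add: Bs)
      then show False using ff by simp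
    qed
    then show "\<not> const_spacelike_rank B ?R" unfolding const_spacelike_rank_def spacelike_rank_def
      using nonconst[OF sb nd nz(2)] i_s1s2 g_s1s2 i_s2w g_s2w sp by blast
    have "s1 \<notin> span {t1, s2}"
    proof
      assume "s1 \<in> span {t1, s2}"
      then obtain a b where ab: "s1 = a *\<^sub>R t1 + b *\<^sub>R s2" by (auto simp: span2)
      have "B s1 s1 = 0" using ff by (subst (2) ab) (simp add: Bs)
      then show False using ff by simp
    qed
    then show "\<not> const_mixed_rank B ?R" unfolding const_mixed_rank_def mixed_rank_def
      using nonconst[OF sb nd nz(2)] i_t1s1 g_t1s1 i_t1s2 g_t1s2 sp by blast
  qed
  have part3: "\<exists>R. alg_curv_tensor R \<and> spacelike_rank B R 2 \<and> timelike_rank B R 2 \<and>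
             \<not> const_mixed_rank B R"
  proof (intro exI conjI)
    define n where "n = t1 + s1"
    have nn: "B n n = 0" "B t1 n = -1" unfolding n_def using ff by (simp_all add: Bs)
    have nnz: "n \<noteq> 0" using nn Bs by auto
    let ?R = "Rt (n /\<^sub>R norm n)"
    show "alg_curv_tensor ?R" by (rule Rt_act)
    show "spacelike_rank B ?R 2" unfolding spacelike_rank_def
      by (rule univ_part[OF sb nd nnz]) (use posdef_of_sig[OF sb] nn nnz in force)
    show "timelike_rank B ?R 2" unfolding timelike_rank_def
    proof (rule univ_part[OF sb nd nnz])
      fix e1 e2 assume "has_signature B (span {e1, e2}) 2 0"
      then have "has_signature (\<lambda>x y. - B x y) (span {e1, e2}) 0 2" using sig_neg by metis
      then show "n \<notin> span {e1, e2}" using posdef_of_sig[OF sb_neg[OF sb]] nn nnz by force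
    qed
    have "n \<in> span {t1, s1}" unfolding n_def span2 by (intro exI[of _ 1]) auto
    moreover have "n \<notin> span {t2, s2}"
    proof
      assume "n \<in> span {t2, s2}"
      then obtain a b where ab: "n = a *\<^sub>R t2 + b *\<^sub>R s2" by (auto simp: span2)
      have "B t1 n = 0" using ff unfolding ab by (simp add: Bs)
      then show False using nn by simp
    qed
    ultimately show "\<not> const_mixed_rank B ?R" unfolding const_mixed_rank_def mixed_rank_def
      using nonconst[OF sb nd nnz] i_t1s1 g_t1s1 i_t2s2 g_t2s2 by blast
  qed
  show ?thesis using part1 part2 part3 by blast
qed

end
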